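(* The class of matroids satisfying the symmetric strong circuit elimination property is closed under series minors: if $M$ satisfies it and $N$ is a series minor of $M$, then $N$ satisfies it.
   Context: A matroid $M$ has the symmetric strong circuit elimination property if, whenever $C_1$ and $C_2$ are circuits of $M$ and $e_1,e_2,e$ are elements with $e_1\in C_1-C_2$, $e_2\in C_2-C_1$ and $e\in C_1\cap C_2$, there is a circuit $C_3$ of $M$ with $\{e_1,e_2\}\subseteq C_3\subseteq (C_1\cup C_2)-e$. A series contraction of $M$ is the contraction $M/f$ of an element $f$ for which there is $g$ with $\{f,g\}$ a cocircuit of $M$; a matroid $N$ is a series minor of $M$ if $N$ can be obtained from $M$ by a sequence of deletions and series contractions. *)

theory Defs
  imports Main
begin

type_synonym 'a matroid = "'a set \<times> 'a set set"

definition ground :: "'a matroid \<Rightarrow> 'a set" where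
  "ground M = fst M"

definition circuits :: "'a matroid \<Rightarrow> 'a set set" where
  "circuits M = snd M"

definition matroid :: "'a matroid \<Rightarrow> bool" where
  "matroid M \<longleftrightarrow> finite (ground M)
     \<and> (\<forall>C\<in>circuits M. C \<subseteq> ground M)
     \<and> {} \<notin> circuits M
     \<and> (\<forall>C1\<in>circuits M. \<forall>C2\<in>circuits M. C1 \<subseteq> C2 \<longrightarrow> C1 = C2)
     \<and> (\<forall>C1\<in>circuits M. \<forall>C2\<in>circuits M. \<forall>e. C1 \<noteq> C2 \<and> e \<in> C1 \<inter> C2 \<longrightarrow>
          (\<exists>C3\<in>circuits M. C3 \<subseteq> (C1 \<union> C2) - {e}))"

definition indep :: "'a matroid \<Rightarrow> 'a set \<Rightarrow> bool" where
  "indep M I \<longleftrightarrow> I \<subseteq> ground M \<and> (\<forall>C\<in>circuits M. \<not> C \<subseteq> I)"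

definition basis :: "'a matroid \<Rightarrow> 'a set \<Rightarrow> bool" where
  "basis M B \<longleftrightarrow> indep M B \<and> (\<forall>I. indep M I \<and> B \<subseteq> I \<longrightarrow> I = B)"

definition cocircuit :: "'a matroid \<Rightarrow> 'a set \<Rightarrow> bool" where
  "cocircuit M D \<longleftrightarrow> D \<subseteq> ground M \<and> (\<forall>B. basis M B \<longrightarrow> D \<inter> B \<noteq> {})
     \<and> (\<forall>D'. D' \<subset> D \<longrightarrow> (\<exists>B. basis M B \<and> D' \<inter> B = {}))"

definition del :: "'a matroid \<Rightarrow> 'a \<Rightarrow> 'a matroid" where
  "del M e = (ground M - {e}, {C \<in> circuits M. e \<notin> C})"

definition contr :: "'a matroid \<Rightarrow> 'a \<Rightarrow> 'a matroid" where
  "contr M f = (ground M - {f},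
     {X. X \<noteq> {} \<and> (\<exists>C\<in>circuits M. X = C - {f})
        \<and> (\<forall>C\<in>circuits M. C - {f} \<noteq> {} \<and> C - {f} \<subseteq> X \<longrightarrow> C - {f} = X)})"

inductive series_minor :: "'a matroid \<Rightarrow> 'a matroid \<Rightarrow> bool" where
  refl: "series_minor M M"
| delete: "series_minor M N \<Longrightarrow> e \<in> ground N \<Longrightarrow> series_minor M (del N e)"
| series_contract: "series_minor M N \<Longrightarrow> cocircuit N {f, g} \<Longrightarrow> series_minor M (contr N f)"

definition sym_strong_elim :: "'a matroid \<Rightarrow> bool" where
  "sym_strong_elim M \<longleftrightarrow>
     (\<forall>C1\<in>circuits M. \<forall>C2\<in>circuits M. \<forall>e1 e2 e.
        e1 \<in> C1 - C2 \<and> e2 \<in> C2 - C1 \<and> e \<in> C1 \<inter> C2 \<longrightarrow>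
        (\<exists>C3\<in>circuits M. {e1, e2} \<subseteq> C3 \<and> C3 \<subseteq> (C1 \<union> C2) - {e}))"

end

theory Submission
  imports Defs
begin

lemma matroidD:
  assumes "matroid N"
  shows "finite (ground N)" "\<And>C. C \<in> circuits N \<Longrightarrow> C \<subseteq> ground N" "{} \<notin> circuits N"
    "\<And>C1 C2. C1 \<in> circuits N \<Longrightarrow> C2 \<in> circuits N \<Longrightarrow> C1 \<subseteq> C2 \<Longrightarrow> C1 = C2"
    "\<And>C1 C2 e. C1 \<in> circuits N \<Longrightarrow> C2 \<in> circuits N \<Longrightarrow> C1 \<noteq> C2 \<Longrightarrow> e \<in> C1 \<Longrightarrow> e \<in> C2
       \<Longrightarrow> \<exists>C3\<in>circuits N. C3 \<subseteq> (C1 \<union> C2) - {e}"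
proof -
  note A = assms[unfolded matroid_def]
  show "finite (ground N)" using A by (elim conjE)
  show "\<And>C. C \<in> circuits N \<Longrightarrow> C \<subseteq> ground N" using A by (elim conjE) (rule bspec)
  show "{} \<notin> circuits N" using A by (elim conjE)
  show "\<And>C1 C2. C1 \<in> circuits N \<Longrightarrow> C2 \<in> circuits N \<Longrightarrow> C1 \<subseteq> C2 \<Longrightarrow> C1 = C2"
    using A by (elim conjE) metis
  show "\<And>C1 C2 e. C1 \<in> circuits N \<Longrightarrow> C2 \<in> circuits N \<Longrightarrow> C1 \<noteq> C2 \<Longrightarrow> e \<in> C1 \<Longrightarrow> e \<in> C2
       \<Longrightarrow> \<exists>C3\<in>circuits N. C3 \<subseteq> (C1 \<union> C2) - {e}"
    using A by (elim conjE) (metis IntI)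
qed

lemma span_lemma:
  assumes m: "matroid N" and s: "sym_strong_elim N" and J: "indep N J" and z: "z \<notin> J"
    and sp: "\<And>y. y \<in> Y \<Longrightarrow> \<exists>Cy\<in>circuits N. y \<in> Cy \<and> Cy \<subseteq> insert y J"
  shows "C' \<in> circuits N \<Longrightarrow> z \<in> C' \<Longrightarrow> C' - insert z J \<subseteq> Y
     \<Longrightarrow> \<exists>C\<in>circuits N. z \<in> C \<and> C \<subseteq> insert z J"
proof (induction "card (C' - insert z J)" arbitrary: C' rule: less_induct)
  case less
  show ?case
  proof (cases "C' \<subseteq> insert z J")
    case True then show ?thesis using less.prems by blast
  next
    case False
    then obtain y where y: "y \<in> C'" "y \<notin> insert z J" by blast
    then have "y \<in> Y" using less.prems(3) by blast
    then obtain Cy where Cy: "Cy \<in> circuits N" "y \<in> Cy" "Cy \<subseteq> insert y J" using sp by blast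
    have zCy: "z \<notin> Cy" using Cy z y by blast
    have "\<not> Cy \<subseteq> C'"
      using matroidD(4)[OF m, of Cy C'] Cy less.prems zCy by blast
    then obtain e2 where e2: "e2 \<in> Cy" "e2 \<notin> C'" by blast
    have "\<exists>C3\<in>circuits N. {z, e2} \<subseteq> C3 \<and> C3 \<subseteq> (C' \<union> Cy) - {y}"
      using s[unfolded sym_strong_elim_def, rule_format, of C' Cy z e2 y]
        less.prems(1,2) Cy(1,2) y(1) zCy e2 by blast
    then obtain C3 where C3: "C3 \<in> circuits N" "{z,e2} \<subseteq> C3" "C3 \<subseteq> (C' \<union> Cy) - {y}" by blast
    have fin: "finite C'" using matroidD(1,2)[OF m] less.prems(1) by (meson finite_subset)
    have "C3 - insert z J \<subset> C' - insert z J" using C3 Cy y by blast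
    then have lt: "card (C3 - insert z J) < card (C' - insert z J)"
      using fin by (meson finite_Diff psubset_card_mono)
    have "C3 - insert z J \<subseteq> Y" using C3 Cy y less.prems(3) by blast
    then show ?thesis using less.hyps[OF lt C3(1)] C3(2) by blast
  qed
qed

lemma cocircuit_meet:
  assumes m: "matroid N" and s: "sym_strong_elim N" and D: "cocircuit N D"
    and C: "C \<in> circuits N" and CD: "C \<inter> D = {x}"
  shows False
proof -
  have D1: "D \<subseteq> ground N" and D2: "\<And>B. basis N B \<Longrightarrow> D \<inter> B \<noteq> {}"
    and D3: "\<And>D'. D' \<subset> D \<Longrightarrow> \<exists>B. basis N B \<and> D' \<inter> B = {}"
    using D unfolding cocircuit_def by auto
  have mfin: "finite (ground N)" and msub: "\<And>C. C \<in> circuits N \<Longrightarrow> C \<subseteq> ground N"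
    using m unfolding matroid_def by auto
  have xD: "x \<in> D" "x \<in> C" using CD by auto
  have "D - {x} \<subset> D" using xD by blast
  then obtain B where B: "basis N B" "(D - {x}) \<inter> B = {}" using D3 by blast
  have xB: "x \<in> B" using B D2[OF B(1)] by blast
  define S where "S = (B - {x}) \<union> (C - {x})"
  have SD: "S \<inter> D = {}"
  proof -
    have "(B - {x}) \<inter> D = {}" using B(2) by blast
    moreover have "(C - {x}) \<inter> D = {}" using CD by blast
    ultimately show ?thesis unfolding S_def by blast
  qed
  have Bg: "B \<subseteq> ground N" using B unfolding basis_def indep_def by blast
  have Sg: "S \<subseteq> ground N" using Bg msub[OF C] unfolding S_def by blast
  have finS: "finite S" using Sg mfin by (meson finite_subset)
  have indBx: "indep N (B - {x})" using B unfolding basis_def indep_def by blast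
  define F where "F = {J. indep N J \<and> B - {x} \<subseteq> J \<and> J \<subseteq> S}"
  have finF: "finite F" using finS unfolding F_def by (simp add: finite_subset)
  have "B - {x} \<in> F" using indBx unfolding F_def S_def by blast
  then have Fne: "F \<noteq> {}" by blast
  obtain J where JF: "J \<in> F" and Jc: "card J = Max (card ` F)"
  proof -
    have "Max (card ` F) \<in> card ` F" using finF Fne by (intro Max_in) auto
    then obtain J0 where "J0 \<in> F" "Max (card ` F) = card J0" by (rule imageE)
    then show ?thesis using that by simp
  qed
  have Jmax: "\<And>J'. J' \<in> F \<Longrightarrow> card J' \<le> card J" using Jc finF by simp
  have J: "indep N J" "B - {x} \<subseteq> J" "J \<subseteq> S" using JF unfolding F_def by auto
  have xJ: "x \<notin> J" using J(3) SD xD by blast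
  have finJ: "finite J" using J(3) finS finite_subset by blast
  have spS: "\<exists>Cy\<in>circuits N. y \<in> Cy \<and> Cy \<subseteq> insert y J" if y: "y \<in> S - J" for y
  proof -
    have "card (insert y J) > card J" using y finJ by simp
    then have "insert y J \<notin> F" using Jmax by fastforce
    then have "\<not> indep N (insert y J)" using J y unfolding F_def by blast
    moreover have "insert y J \<subseteq> ground N" using J y Sg by blast
    ultimately obtain Cy where Cy: "Cy \<in> circuits N" "Cy \<subseteq> insert y J"
      unfolding indep_def by blast
    have "y \<in> Cy" using Cy J(1) unfolding indep_def by blast
    then show ?thesis using Cy by blast
  qed
  have spx: "\<exists>Cx\<in>circuits N. x \<in> Cx \<and> Cx \<subseteq> insert x J"
    using span_lemma[OF m s J(1) xJ, of "S - J" C] spS C xD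
    unfolding S_def by blast
  have spz: "\<exists>Cz\<in>circuits N. z \<in> Cz \<and> Cz \<subseteq> insert z J" if z: "z \<in> ground N - J" for z
  proof (cases "z = x")
    case True then show ?thesis using spx by blast
  next
    case zx: False
    show ?thesis
    proof (cases "z \<in> S")
      case True then show ?thesis using spS z by blast
    next
      case False
      have zB: "z \<notin> B" using False zx unfolding S_def by blast
      have "\<not> indep N (insert z B)" using B(1) zB unfolding basis_def by blast
      moreover have "insert z B \<subseteq> ground N" using z Bg by blast
      ultimately obtain Cz where Cz: "Cz \<in> circuits N" "Cz \<subseteq> insert z B"
        unfolding indep_def by blast
      have zCz: "z \<in> Cz" using Cz B(1) unfolding basis_def indep_def by blast
      have "Cz - insert z J \<subseteq> {x}" using Cz J(2) by blast
      then show ?thesis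
        using span_lemma[OF m s J(1), of z "{x}" Cz] z spx Cz zCz by blast
    qed
  qed
  have "basis N J"
    unfolding basis_def
  proof (intro conjI allI impI)
    show "indep N J" by (rule J(1))
    fix I assume I: "indep N I \<and> J \<subseteq> I"
    show "I = J"
    proof (rule ccontr)
      assume "I \<noteq> J"
      then obtain z where "z \<in> I" "z \<notin> J" using I by blast
      moreover have "I \<subseteq> ground N" using I unfolding indep_def by blast
      ultimately obtain Cz where "Cz \<in> circuits N" "Cz \<subseteq> insert z J" using spz by blast
      then show False using I \<open>z \<in> I\<close> unfolding indep_def by blast
    qed
  qed
  then have "D \<inter> J \<noteq> {}" using D unfolding cocircuit_def by blast
  then show False using J(3) SD by blast
qed

lemma series_pair:
  assumes m: "matroid N" and s: "sym_strong_elim N" and D: "cocircuit N {f, g}"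
    and C: "C \<in> circuits N"
  shows "(f \<in> C \<longrightarrow> g \<in> C \<and> g \<noteq> f) \<and> (g \<in> C \<longrightarrow> f \<in> C)"
proof -
  have "C \<inter> {f, g} \<noteq> {f}" "C \<inter> {f, g} \<noteq> {g}"
    using cocircuit_meet[OF m s D C] by auto
  then show ?thesis by auto
qed

lemma contr_circuits:
  assumes m: "matroid N"
    and P: "\<And>C. C \<in> circuits N \<Longrightarrow> (f \<in> C \<longrightarrow> g \<in> C \<and> g \<noteq> f) \<and> (g \<in> C \<longrightarrow> f \<in> C)"
  shows "circuits (contr N f) = {C - {f} | C. C \<in> circuits N}"
    and "\<And>C C'. C \<in> circuits N \<Longrightarrow> C' \<in> circuits N \<Longrightarrow> C' - {f} \<subseteq> C - {f} \<Longrightarrow> C' = C"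
    and "\<And>C. C \<in> circuits N \<Longrightarrow> C - {f} \<noteq> {}"
proof -
  note cl = matroidD(4)[OF m]
  note ne = matroidD(3)[OF m]
  show mn: "C' = C" if "C \<in> circuits N" "C' \<in> circuits N" "C' - {f} \<subseteq> C - {f}" for C C'
  proof (cases "f \<in> C'")
    case True
    then have "g \<in> C'" "g \<noteq> f" using P[OF that(2)] by auto
    then have "g \<in> C" using that(3) by blast
    then have "f \<in> C" using P[OF that(1)] by blast
    then have "C' \<subseteq> C" using that(3) True by blast
    then show ?thesis using cl that(1,2) by blast
  next
    case False
    then have "C' \<subseteq> C" using that(3) by blast
    then show ?thesis using cl that(1,2) by blast
  qed
  show nz: "C - {f} \<noteq> {}" if "C \<in> circuits N" for C
  proof
    assume e: "C - {f} = {}"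
    show False
    proof (cases "f \<in> C")
      case True then show False using P[OF that] e by blast
    next
      case False then have "C = {}" using e by blast
      then show False using ne that by simp
    qed
  qed
  show "circuits (contr N f) = {C - {f} | C. C \<in> circuits N}"
  proof (rule set_eqI)
    fix X
    have eq: "X \<in> circuits (contr N f) \<longleftrightarrow> X \<noteq> {} \<and> (\<exists>C\<in>circuits N. X = C - {f})
        \<and> (\<forall>C\<in>circuits N. C - {f} \<noteq> {} \<and> C - {f} \<subseteq> X \<longrightarrow> C - {f} = X)"
      unfolding contr_def circuits_def by simp
    show "X \<in> circuits (contr N f) \<longleftrightarrow> X \<in> {C - {f} | C. C \<in> circuits N}"
    proof
      assume "X \<in> circuits (contr N f)"
      then have "\<exists>C\<in>circuits N. X = C - {f}" using eq by simp
      then show "X \<in> {C - {f} | C. C \<in> circuits N}" by blast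
    next
      assume "X \<in> {C - {f} | C. C \<in> circuits N}"
      then obtain C where C: "C \<in> circuits N" "X = C - {f}" by blast
      have "\<forall>C'\<in>circuits N. C' - {f} \<noteq> {} \<and> C' - {f} \<subseteq> X \<longrightarrow> C' - {f} = X"
      proof (intro ballI impI)
        fix C' assume C': "C' \<in> circuits N" "C' - {f} \<noteq> {} \<and> C' - {f} \<subseteq> X"
        then have "C' - {f} \<subseteq> C - {f}" using C(2) by simp
        then have "C' = C" using mn[OF C(1) C'(1)] by simp
        then show "C' - {f} = X" using C by simp
      qed
      moreover have "X \<noteq> {}" using nz[OF C(1)] C(2) by simp
      moreover have "\<exists>C\<in>circuits N. X = C - {f}" using C by blast
      ultimately show "X \<in> circuits (contr N f)" using eq by simp
    qed
  qed
qed

lemma invariant: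
  assumes "series_minor M N" "matroid M" "sym_strong_elim M"
  shows "matroid N \<and> sym_strong_elim N"
  using assms
proof (induction rule: series_minor.induct)
  case refl
  then show ?case by blast
next
  case (delete M N e)
  then have m: "matroid N" and s: "sym_strong_elim N" by auto
  have cd: "circuits (del N e) = {C \<in> circuits N. e \<notin> C}"
    and gd: "ground (del N e) = ground N - {e}"
    unfolding del_def circuits_def ground_def by auto
  note md = matroidD[OF m]
  have "matroid (del N e)"
    unfolding matroid_def cd gd
  proof (intro conjI ballI allI impI)
    show "finite (ground N - {e})" using md(1) by simp
    fix C assume "C \<in> {C \<in> circuits N. e \<notin> C}"
    then show "C \<subseteq> ground N - {e}" using md(2) by blast
  next
    show "{} \<notin> {C \<in> circuits N. e \<notin> C}" using md(3) by simp
  next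
    fix C1 C2 assume "C1 \<in> {C \<in> circuits N. e \<notin> C}" "C2 \<in> {C \<in> circuits N. e \<notin> C}" "C1 \<subseteq> C2"
    then show "C1 = C2" using md(4) by simp
  next
    fix C1 C2 x assume h: "C1 \<in> {C \<in> circuits N. e \<notin> C}" "C2 \<in> {C \<in> circuits N. e \<notin> C}"
      "C1 \<noteq> C2 \<and> x \<in> C1 \<inter> C2"
    then obtain C3 where "C3 \<in> circuits N" "C3 \<subseteq> C1 \<union> C2 - {x}"
      using md(5)[of C1 C2 x] by auto
    then show "\<exists>C3\<in>{C \<in> circuits N. e \<notin> C}. C3 \<subseteq> C1 \<union> C2 - {x}" using h by blast
  qed
  moreover have "sym_strong_elim (del N e)"
    unfolding sym_strong_elim_def cd
  proof (intro ballI allI impI)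
    fix C1 C2 e1 e2 x assume h: "C1 \<in> {C \<in> circuits N. e \<notin> C}" "C2 \<in> {C \<in> circuits N. e \<notin> C}"
      "e1 \<in> C1 - C2 \<and> e2 \<in> C2 - C1 \<and> x \<in> C1 \<inter> C2"
    then obtain C3 where "C3 \<in> circuits N" "{e1, e2} \<subseteq> C3" "C3 \<subseteq> C1 \<union> C2 - {x}"
      using s[unfolded sym_strong_elim_def, rule_format, of C1 C2 e1 e2 x] by auto
    then show "\<exists>C3\<in>{C \<in> circuits N. e \<notin> C}. {e1, e2} \<subseteq> C3 \<and> C3 \<subseteq> C1 \<union> C2 - {x}"
      using h by blast
  qed
  ultimately show ?case by blast
next
  case (series_contract M N f g)
  then have m: "matroid N" and s: "sym_strong_elim N" by auto
  have P: "\<And>C. C \<in> circuits N \<Longrightarrow> (f \<in> C \<longrightarrow> g \<in> C \<and> g \<noteq> f) \<and> (g \<in> C \<longrightarrow> f \<in> C)"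
    using series_pair[OF m s series_contract.hyps(2)] by blast
  note cc = contr_circuits[OF m P]
  have gc: "ground (contr N f) = ground N - {f}" unfolding contr_def ground_def by simp
  have memc: "\<And>X. X \<in> circuits (contr N f) \<longleftrightarrow> (\<exists>C. C \<in> circuits N \<and> X = C - {f})"
    using cc(1) by blast
  have "matroid (contr N f)"
    unfolding matroid_def gc
  proof (intro conjI ballI allI impI)
    show "finite (ground N - {f})" using matroidD(1)[OF m] by simp
  next
    fix C assume "C \<in> circuits (contr N f)"
    then obtain K where "K \<in> circuits N" "C = K - {f}" using memc by blast
    then show "C \<subseteq> ground N - {f}" using matroidD(2)[OF m] by blast
  next
    show "{} \<notin> circuits (contr N f)"
    proof
      assume "{} \<in> circuits (contr N f)"
      then obtain K where "K \<in> circuits N" "{} = K - {f}" using memc by blast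
      then show False using cc(3) by metis
    qed
  next
    fix C1 C2 assume "C1 \<in> circuits (contr N f)" "C2 \<in> circuits (contr N f)" and sub: "C1 \<subseteq> C2"
    then obtain K1 K2 where K: "K1 \<in> circuits N" "C1 = K1 - {f}" "K2 \<in> circuits N" "C2 = K2 - {f}"
      using memc by meson
    then have "K1 = K2" using cc(2)[of K2 K1] sub by simp
    then show "C1 = C2" using K by simp
  next
    fix C1 C2 e
    assume "C1 \<in> circuits (contr N f)" "C2 \<in> circuits (contr N f)" and h: "C1 \<noteq> C2 \<and> e \<in> C1 \<inter> C2"
    then obtain K1 K2 where K: "K1 \<in> circuits N" "C1 = K1 - {f}" "K2 \<in> circuits N" "C2 = K2 - {f}"
      using memc by meson
    have "K1 \<noteq> K2" "e \<in> K1" "e \<in> K2" "e \<noteq> f" using h K by auto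
    then obtain K3 where K3: "K3 \<in> circuits N" "K3 \<subseteq> K1 \<union> K2 - {e}"
      using matroidD(5)[OF m, of K1 K2 e] K by blast
    have "K3 - {f} \<in> circuits (contr N f)" using memc K3(1) by blast
    moreover have "K3 - {f} \<subseteq> C1 \<union> C2 - {e}" using K3(2) K by blast
    ultimately show "\<exists>C3\<in>circuits (contr N f). C3 \<subseteq> C1 \<union> C2 - {e}" by blast
  qed
  moreover have "sym_strong_elim (contr N f)"
    unfolding sym_strong_elim_def
  proof (intro ballI allI impI)
    fix C1 C2 e1 e2 e
    assume "C1 \<in> circuits (contr N f)" "C2 \<in> circuits (contr N f)"
      and h: "e1 \<in> C1 - C2 \<and> e2 \<in> C2 - C1 \<and> e \<in> C1 \<inter> C2"
    then obtain K1 K2 where K: "K1 \<in> circuits N" "C1 = K1 - {f}" "K2 \<in> circuits N" "C2 = K2 - {f}"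
      using memc by meson
    have "e1 \<in> K1 - K2 \<and> e2 \<in> K2 - K1 \<and> e \<in> K1 \<inter> K2" using h K by auto
    then obtain K3 where K3: "K3 \<in> circuits N" "{e1, e2} \<subseteq> K3" "K3 \<subseteq> K1 \<union> K2 - {e}"
      using s[unfolded sym_strong_elim_def, rule_format, of K1 K2 e1 e2 e] K(1,3) by blast
    have "K3 - {f} \<in> circuits (contr N f)" using memc K3(1) by blast
    moreover have "{e1, e2} \<subseteq> K3 - {f}" using K3(2) h K by auto
    moreover have "K3 - {f} \<subseteq> C1 \<union> C2 - {e}" using K3(3) K by blast
    ultimately show "\<exists>C3\<in>circuits (contr N f). {e1, e2} \<subseteq> C3 \<and> C3 \<subseteq> C1 \<union> C2 - {e}" by blast
  qed
  ultimately show ?case by blast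
qed

theorem lemma2p1:
  assumes "matroid M" and "sym_strong_elim M" and "series_minor M N"
  shows "sym_strong_elim N"
  using invariant[OF assms(3,1,2)] by blast

end
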